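(* For $S\subseteq V$ let $\delta^-(S)$ be the set of fragments $(v_1,\dots,v_\ell)$ with $v_1\notin S$ and $\{v_1,\dots,v_\ell\}\cap S\neq\emptyset$, and for a fragment $F=(v_1,\dots,v_\ell)$ let $a_S(F)=|\{i\in\{1,\dots,\ell-1\}: v_i\notin S,\ v_{i+1}\in S\}|$. Then: (i) the fragment-incidence vector $x$ of every feasible solution satisfies $\sum_{F\in\delta^-(S)}x_F\ge\lceil\sum_{v\in S}q_v/Q\rceil$ for all $S\subseteq V$; (ii) for every $S\subseteq V$ and every $x\ge 0$, $\sum_{F}a_S(F)x_F\ge\sum_{F\in\delta^-(S)}x_F$, so the inequality in (i) implies the rounded capacity inequality $\sum_F a_S(F)x_F\ge\lceil\sum_{v\in S}q_v/Q\rceil$ for the same $S$.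
   Context: Instance data: a task set $V=\{1,\dots,n\}$, a depot $0$, $N=V\cup\{0\}$. For distinct $u,v\in N$ there are a travel time $t_{uv}\ge 0$ and travel cost $c_{uv}\ge0$. Each $v\in N$ has a duration $d_v\ge 0$, demand $q_v\ge 0$ and a time window $[\alpha_v,\beta_v]$; the depot has $d_0=q_0=0$, $[\alpha_0,\beta_0]=[0,T_{\max}]$. Vehicle capacity is $Q>0$ and there are $|K|$ vehicles. $D$ is a set of unordered pairs $\{u,v\}$ of distinct tasks, $V_D=\{v\in V:\exists \{u,v\}\in D\}$, each with nonnegative parameters $\delta^{\min}_{uv},\delta^{\max}_{uv},\delta^{\min}_{vu},\delta^{\max}_{vu}$; start times satisfy the dependency if either $b_u\le b_v$ and $\delta^{\min}_{uv}\le b_v-b_u\le\delta^{\max}_{uv}$, or $b_v\le b_u$ and $\delta^{\min}_{vu}\le b_u-b_v\le\delta^{\max}_{vu}$. A feasible solution consists of at most $|K|$ routes $(0,w_1,\dots,w_m,0)$ such that every task lies in exactly one route, each route has total demand at most $Q$, and there are start times $b_w\in[\alpha_w,\beta_w]$ with $b_{w_{i+1}}\ge b_{w_i}+d_{w_i}+t_{w_iw_{i+1}}$ and all pairs of $D$ satisfying their dependency. A fragment is a sequence $(v_1,\dots,v_\ell)$, $\ell\ge2$, with $v_1,v_\ell\in V_D\cup\{0\}$, intermediate nodes in $V\setminus V_D$, no task repeated, total demand of $v_1,\dots,v_{\ell-1}$ at most $Q$, admitting a time-feasible schedule. The fragments of a route are its maximal subsequences whose first and last elements are consecutive occurrences of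 nodes from $V_D\cup\{0\}$; the fragment-incidence vector $x$ (indexed by all fragments) has $x_F=1$ iff $F$ is a fragment of some route of the solution. *)

theory Defs
  imports Main Complex_Main
begin

text \<open>Instance data. Nodes are natural numbers; the depot is 0 and the tasks are 1..n.\<close>
text \<open>ntasks = n; ttime = t; tcost = c; dur = d; dem = q; twa/twb = alpha/beta; cap = Q; nveh = |K|;
  deps = D; dmin u v / dmax u v = delta min/max uv.\<close>
record vrp_inst =
  ntasks :: nat
  ttime :: "nat \<Rightarrow> nat \<Rightarrow> real"
  tcost :: "nat \<Rightarrow> nat \<Rightarrow> real"
  dur :: "nat \<Rightarrow> real"
  dem :: "nat \<Rightarrow> real"
  twa :: "nat \<Rightarrow> real"
  twb :: "nat \<Rightarrow> real"
  Tmax :: real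
  cap :: real
  nveh :: nat
  deps :: "nat set set"
  dmin :: "nat \<Rightarrow> nat \<Rightarrow> real"
  dmax :: "nat \<Rightarrow> nat \<Rightarrow> real"

definition tasks :: "vrp_inst \<Rightarrow> nat set" where
  "tasks I = {1..ntasks I}"

definition nodes :: "vrp_inst \<Rightarrow> nat set" where
  "nodes I = insert 0 (tasks I)"

definition dep_tasks :: "vrp_inst \<Rightarrow> nat set" where
  "dep_tasks I = {v \<in> tasks I. \<exists>u. {u, v} \<in> deps I}"

definition key_nodes :: "vrp_inst \<Rightarrow> nat set" where
  "key_nodes I = insert 0 (dep_tasks I)"

definition valid_instance :: "vrp_inst \<Rightarrow> bool" where
  "valid_instance I \<longleftrightarrow>
     (\<forall>u\<in>nodes I. \<forall>v\<in>nodes I. u \<noteq> v \<longrightarrow> ttime I u v \<ge> 0 \<and> tcost I u v \<ge> 0) \<and>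
     (\<forall>v\<in>nodes I. dur I v \<ge> 0 \<and> dem I v \<ge> 0) \<and>
     dur I 0 = 0 \<and> dem I 0 = 0 \<and> twa I 0 = 0 \<and> twb I 0 = Tmax I \<and>
     cap I > 0 \<and>
     (\<forall>p\<in>deps I. \<exists>u v. p = {u, v} \<and> u \<noteq> v \<and> u \<in> tasks I \<and> v \<in> tasks I) \<and>
     (\<forall>u v. {u, v} \<in> deps I \<longrightarrow>
        dmin I u v \<ge> 0 \<and> dmax I u v \<ge> 0 \<and> dmin I v u \<ge> 0 \<and> dmax I v u \<ge> 0)"

definition sched_ok :: "vrp_inst \<Rightarrow> nat list \<Rightarrow> (nat \<Rightarrow> real) \<Rightarrow> bool" where
  "sched_ok I p \<sigma> \<longleftrightarrow>
     (\<forall>i < length p. twa I (p ! i) \<le> \<sigma> i \<and> \<sigma> i \<le> twb I (p ! i)) \<and>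
     (\<forall>i. Suc i < length p \<longrightarrow>
        \<sigma> (Suc i) \<ge> \<sigma> i + dur I (p ! i) + ttime I (p ! i) (p ! Suc i))"

definition dep_ok :: "vrp_inst \<Rightarrow> (nat \<Rightarrow> real) \<Rightarrow> nat \<Rightarrow> nat \<Rightarrow> bool" where
  "dep_ok I b u v \<longleftrightarrow>
     (b u \<le> b v \<and> dmin I u v \<le> b v - b u \<and> b v - b u \<le> dmax I u v) \<or>
     (b v \<le> b u \<and> dmin I v u \<le> b u - b v \<and> b u - b v \<le> dmax I v u)"

definition is_fragment :: "vrp_inst \<Rightarrow> nat list \<Rightarrow> bool" where
  "is_fragment I F \<longleftrightarrow>
     length F \<ge> 2 \<and> hd F \<in> key_nodes I \<and> last F \<in> key_nodes I \<and>
     (\<forall>i. 0 < i \<and> i < length F - 1 \<longrightarrow> F ! i \<in> tasks I - dep_tasks I) \<and>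
     distinct (filter (\<lambda>v. v \<in> tasks I) F) \<and>
     sum_list (map (dem I) (butlast F)) \<le> cap I \<and>
     (\<exists>\<sigma>. sched_ok I F \<sigma>)"

definition fragments :: "vrp_inst \<Rightarrow> nat list set" where
  "fragments I = {F. is_fragment I F}"

definition route_frags :: "vrp_inst \<Rightarrow> nat list \<Rightarrow> nat list set" where
  "route_frags I r = {take (j - i + 1) (drop i r) | i j.
      i < j \<and> j < length r \<and> r ! i \<in> key_nodes I \<and> r ! j \<in> key_nodes I \<and>
      (\<forall>k. i < k \<and> k < j \<longrightarrow> r ! k \<notin> key_nodes I)}"

text \<open>A solution is a list of routes, each given by its task sequence (w_1,...,w_m);
  the route itself is (0,w_1,...,w_m,0).\<close>
definition feasible_solution :: "vrp_inst \<Rightarrow> nat list list \<Rightarrow> bool" where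
  "feasible_solution I R \<longleftrightarrow>
     length R \<le> nveh I \<and>
     (\<forall>ws\<in>set R. ws \<noteq> []) \<and>
     distinct (concat R) \<and> set (concat R) = tasks I \<and>
     (\<forall>ws\<in>set R. sum_list (map (dem I) ws) \<le> cap I) \<and>
     (\<exists>b :: nat \<Rightarrow> real.
        (\<forall>v\<in>tasks I. twa I v \<le> b v \<and> b v \<le> twb I v) \<and>
        (\<forall>ws\<in>set R. \<exists>\<sigma>. sched_ok I (0 # ws @ [0]) \<sigma> \<and>
              (\<forall>i < length ws. \<sigma> (Suc i) = b (ws ! i))) \<and>
        (\<forall>u v. {u, v} \<in> deps I \<longrightarrow> dep_ok I b u v))"

definition frag_incidence :: "vrp_inst \<Rightarrow> nat list list \<Rightarrow> nat list \<Rightarrow> real" where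
  "frag_incidence I R F =
     (if is_fragment I F \<and> (\<exists>ws\<in>set R. F \<in> route_frags I (0 # ws @ [0])) then 1 else 0)"

definition delta_in :: "vrp_inst \<Rightarrow> nat set \<Rightarrow> nat list set" where
  "delta_in I S = {F \<in> fragments I. hd F \<notin> S \<and> set F \<inter> S \<noteq> {}}"

definition a_coef :: "nat set \<Rightarrow> nat list \<Rightarrow> nat" where
  "a_coef S F = card {i. i + 1 < length F \<and> F ! i \<notin> S \<and> F ! (i + 1) \<in> S}"

end

theory Submission
  imports Defs
begin

lemma frag_set_len:
  assumes "is_fragment I F"
  shows "set F \<subseteq> nodes I \<and> length F \<le> ntasks I + 2"
proof -
  have L: "length F \<ge> 2" and h: "hd F \<in> key_nodes I" and l: "last F \<in> key_nodes I"
    and mid: "\<forall>i. 0 < i \<and> i < length F - 1 \<longrightarrow> F ! i \<in> tasks I - dep_tasks I"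
    and d: "distinct (filter (\<lambda>v. v \<in> tasks I) F)"
    using assms unfolding is_fragment_def by auto
  define M where "M = butlast (tl F)"
  have Fe: "F = hd F # M @ [last F]"
  proof -
    obtain a rest where ar: "F = a # rest" using L by (cases F) auto
    have "rest \<noteq> []" using L ar by auto
    then show ?thesis unfolding M_def ar by simp
  qed
  have lenM: "length M = length F - 2" unfolding M_def by simp
  have Mt: "set M \<subseteq> tasks I"
  proof
    fix x assume "x \<in> set M"
    then obtain k where k: "k < length M" "M ! k = x" by (auto simp: in_set_conv_nth)
    have "M ! k = F ! Suc k" unfolding M_def using k lenM
      by (simp add: nth_butlast nth_tl M_def)
    moreover have "0 < Suc k \<and> Suc k < length F - 1" using k lenM L by auto
    ultimately show "x \<in> tasks I" using mid k by auto
  qed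
  have kn: "key_nodes I \<subseteq> nodes I" unfolding key_nodes_def nodes_def dep_tasks_def by auto
  have "set F \<subseteq> nodes I"
    using Mt h l kn by (subst Fe) (auto simp: nodes_def)
  moreover have "filter (\<lambda>v. v \<in> tasks I) F = filter (\<lambda>v. v \<in> tasks I) [hd F] @ M @ filter (\<lambda>v. v \<in> tasks I) [last F]"
    using Mt by (subst Fe) (simp, meson filter_True subsetD)
  hence "length M \<le> length (filter (\<lambda>v. v \<in> tasks I) F)" by simp
  moreover have "length (filter (\<lambda>v. v \<in> tasks I) F) \<le> ntasks I"
  proof -
    have "length (filter (\<lambda>v. v \<in> tasks I) F) = card (set (filter (\<lambda>v. v \<in> tasks I) F))"
      using d distinct_card by metis
    also have "\<dots> \<le> card (tasks I)" by (rule card_mono) (auto simp: tasks_def)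
    finally show ?thesis by (simp add: tasks_def)
  qed
  ultimately show ?thesis using lenM by auto
qed

lemma finite_fragments: "finite (fragments I)"
proof -
  have "fragments I \<subseteq> {xs. set xs \<subseteq> nodes I \<and> length xs \<le> ntasks I + 2}"
    using frag_set_len unfolding fragments_def by auto
  moreover have "finite (nodes I)" by (simp add: nodes_def tasks_def)
  ultimately show ?thesis using finite_lists_length_le finite_subset by blast
qed

lemma part2:
  assumes "\<forall>F\<in>fragments I. x F \<ge> 0"
  shows "(\<Sum>F\<in>fragments I. real (a_coef S F) * x F) \<ge> (\<Sum>F\<in>delta_in I S. x F)"
proof -
  have sub: "delta_in I S \<subseteq> fragments I" unfolding delta_in_def by auto
  have "(\<Sum>F\<in>delta_in I S. x F) \<le> (\<Sum>F\<in>delta_in I S. real (a_coef S F) * x F)"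
  proof (rule sum_mono)
    fix F assume F: "F \<in> delta_in I S"
    then have h: "hd F \<notin> S" and ne: "set F \<inter> S \<noteq> {}" and fr: "F \<in> fragments I"
      unfolding delta_in_def by auto
    have "F \<noteq> []" using ne by auto
    obtain p where p: "p < length F" "F ! p \<in> S" using ne by (auto simp: in_set_conv_nth)
    have "\<exists>i. i + 1 < length F \<and> F ! i \<notin> S \<and> F ! (i + 1) \<in> S"
    proof (rule ccontr)
      assume nx: "\<not> ?thesis"
      have "\<forall>k. k < length F \<longrightarrow> F ! k \<notin> S"
      proof (intro allI)
        fix k show "k < length F \<longrightarrow> F ! k \<notin> S"
        proof (induction k)
          case 0 then show ?case using h by (simp add: hd_conv_nth \<open>F \<noteq> []\<close>)
        next
          case (Suc k) then show ?case using nx by auto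
        qed
      qed
      then show False using p by auto
    qed
    then obtain i where i: "i + 1 < length F \<and> F ! i \<notin> S \<and> F ! (i + 1) \<in> S" by blast
    have fin: "finite {i. i + 1 < length F \<and> F ! i \<notin> S \<and> F ! (i + 1) \<in> S}"
      by (rule finite_subset[of _ "{..<length F}"]) auto
    have "{i. i + 1 < length F \<and> F ! i \<notin> S \<and> F ! (i + 1) \<in> S} \<noteq> {}" using i by blast
    then have "a_coef S F \<ge> 1" unfolding a_coef_def using fin
      by (simp add: Suc_le_eq card_gt_0_iff)
    moreover have "x F \<ge> 0" using assms fr by auto
    ultimately show "x F \<le> real (a_coef S F) * x F"
      using mult_right_mono[of 1 "real (a_coef S F)" "x F"] by simp
  qed
  also have "\<dots> \<le> (\<Sum>F\<in>fragments I. real (a_coef S F) * x F)"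
    by (rule sum_mono2[OF finite_fragments sub]) (use assms in auto)
  finally show ?thesis .
qed


lemma sl_take_le:
  assumes "\<forall>v\<in>set xs. (f v::real) \<ge> 0"
  shows "sum_list (map f (take n xs)) \<le> sum_list (map f xs)"
proof -
  have "sum_list (map f xs) = sum_list (map f (take n xs)) + sum_list (map f (drop n xs))"
    by (metis append_take_drop_id map_append sum_list_append)
  moreover have "sum_list (map f (drop n xs)) \<ge> 0"
    using assms by (intro sum_list_nonneg) (auto dest: in_set_dropD)
  ultimately show ?thesis by simp
qed

lemma sl_drop_le:
  assumes "\<forall>v\<in>set xs. (f v::real) \<ge> 0"
  shows "sum_list (map f (drop n xs)) \<le> sum_list (map f xs)"
proof -
  have "sum_list (map f xs) = sum_list (map f (take n xs)) + sum_list (map f (drop n xs))"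
    by (metis append_take_drop_id map_append sum_list_append)
  moreover have "sum_list (map f (take n xs)) \<ge> 0"
    using assms by (intro sum_list_nonneg) (auto dest: in_set_takeD)
  ultimately show ?thesis by simp
qed

lemma route_frag_is_fragment:
  assumes V: "valid_instance I" and wt: "set ws \<subseteq> tasks I" and dw: "distinct ws"
    and cw: "sum_list (map (dem I) ws) \<le> cap I"
    and sc: "sched_ok I (0 # ws @ [0]) \<sigma>"
    and FR: "F \<in> route_frags I (0 # ws @ [0])"
  shows "is_fragment I F"
proof -
  define r where "r = 0 # ws @ [0]"
  obtain i j where ij: "i < j" "j < length r" "F = take (j - i + 1) (drop i r)"
    and ki: "r ! i \<in> key_nodes I" and kj: "r ! j \<in> key_nodes I"
    and nk: "\<forall>k. i < k \<and> k < j \<longrightarrow> r ! k \<notin> key_nodes I"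
    using FR unfolding route_frags_def r_def by blast
  have lenF: "length F = j - i + 1" using ij by simp
  have nth: "\<And>k. k < length F \<Longrightarrow> F ! k = r ! (i + k)" using ij lenF by simp
  have Fne: "F \<noteq> []" using lenF by auto
  have hdF: "hd F = r ! i" using nth[of 0] Fne lenF by (simp add: hd_conv_nth)
  have lastF: "last F = r ! j" using nth[of "length F - 1"] Fne lenF ij by (simp add: last_conv_nth)
  have rn: "set r \<subseteq> nodes I" using wt unfolding r_def nodes_def by auto
  have t0: "0 \<notin> tasks I" by (simp add: tasks_def)
  have mid: "\<forall>k. 0 < k \<and> k < length F - 1 \<longrightarrow> F ! k \<in> tasks I - dep_tasks I"
  proof (intro allI impI)
    fix k assume k: "0 < k \<and> k < length F - 1"
    have e: "F ! k = r ! (i + k)" using nth k by auto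
    have "r ! (i + k) \<notin> key_nodes I" using nk k lenF by auto
    moreover have "r ! (i + k) \<in> nodes I" using rn ij k lenF by (auto intro!: subsetD[OF rn] nth_mem)
    ultimately show "F ! k \<in> tasks I - dep_tasks I" using e
      unfolding key_nodes_def nodes_def by auto
  qed
  have dist: "distinct (filter (\<lambda>v. v \<in> tasks I) F)"
  proof -
    have "filter (\<lambda>v. v \<in> tasks I) r = ws" using wt t0 unfolding r_def
      by (simp add: filter_id_conv subset_iff)
    hence d: "distinct (filter (\<lambda>v. v \<in> tasks I) r)" using dw by simp
    have "r = take i r @ F @ drop (j - i + 1) (drop i r)" unfolding ij(3) by (simp only: append_take_drop_id)
    hence "filter (\<lambda>v. v \<in> tasks I) r = filter (\<lambda>v. v \<in> tasks I) (take i r) @ filter (\<lambda>v. v \<in> tasks I) F @ filter (\<lambda>v. v \<in> tasks I) (drop (j - i + 1) (drop i r))"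
      by (metis filter_append)
    with d show ?thesis by (metis distinct_append)
  qed
  have nonneg: "\<forall>v\<in>set r. dem I v \<ge> 0" using V rn unfolding valid_instance_def by auto
  have dem: "sum_list (map (dem I) (butlast F)) \<le> cap I"
  proof -
    have "butlast F = take (j - i) (drop i r)" using ij by (simp add: butlast_take)
    hence "sum_list (map (dem I) (butlast F)) \<le> sum_list (map (dem I) (drop i r))"
      using nonneg sl_take_le[of "drop i r" "dem I" "j - i"] by (auto dest: in_set_dropD)
    also have "\<dots> \<le> sum_list (map (dem I) r)" using nonneg by (rule sl_drop_le)
    also have "\<dots> = sum_list (map (dem I) ws)" using V unfolding r_def valid_instance_def by simp
    finally show ?thesis using cw by simp
  qed
  have sch: "sched_ok I F (\<lambda>k. \<sigma> (i + k))"
    using sc ij unfolding sched_ok_def r_def[symmetric] by (auto simp: nth lenF)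
  show ?thesis unfolding is_fragment_def
    using lenF ij hdF lastF ki kj mid dist dem sch by auto
qed


lemma exists_entry_frag:
  assumes St: "S \<subseteq> tasks I" and ne: "set ws \<inter> S \<noteq> {}"
  shows "\<exists>F\<in>route_frags I (0 # ws @ [0]). hd F \<notin> S \<and> set F \<inter> S \<noteq> {} \<and> set F \<subseteq> set (0 # ws @ [0])"
proof -
  define r where "r = 0 # ws @ [0]"
  have t0: "0 \<notin> S" using St by (auto simp: tasks_def)
  have k0: "0 \<in> key_nodes I" by (simp add: key_nodes_def)
  define P where "P = {k. k < length r \<and> r ! k \<in> S}"
  have finP: "finite P" unfolding P_def by simp
  have "P \<noteq> {}"
  proof -
    obtain v where v: "v \<in> set ws" "v \<in> S" using ne by auto
    have "v \<in> set r" using v unfolding r_def by simp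
    then obtain k where "k < length r" "r ! k = v" by (auto simp: in_set_conv_nth)
    thus ?thesis using v unfolding P_def by auto
  qed
  define p where "p = Min P"
  have pP: "p \<in> P" using finP \<open>P \<noteq> {}\<close> unfolding p_def by simp
  have pmin: "\<And>k. k \<in> P \<Longrightarrow> p \<le> k" using finP unfolding p_def by simp
  have p0: "p > 0" using pP t0 unfolding P_def r_def by (cases p) auto
  have plast: "r ! (length r - 1) = 0" unfolding r_def by (simp add: nth_append)
  have pl: "p < length r" using pP unfolding P_def by auto
  define K1 where "K1 = {k. k < p \<and> r ! k \<in> key_nodes I}"
  have finK1: "finite K1" unfolding K1_def by simp
  have K1ne: "0 \<in> K1" unfolding K1_def using p0 k0 by (simp add: r_def)
  define i where "i = Max K1"
  have iK: "i \<in> K1" unfolding i_def using finK1 K1ne by (metis Max_in empty_iff)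
  have imax: "\<And>k. k \<in> K1 \<Longrightarrow> k \<le> i" unfolding i_def using finK1 by simp
  define K2 where "K2 = {k. p \<le> k \<and> k < length r \<and> r ! k \<in> key_nodes I}"
  have finK2: "finite K2" unfolding K2_def by simp
  have K2ne: "length r - 1 \<in> K2" unfolding K2_def using pl plast k0 by auto
  define j where "j = Min K2"
  have jK: "j \<in> K2" unfolding j_def using finK2 K2ne by (metis Min_in empty_iff)
  have jmin: "\<And>k. k \<in> K2 \<Longrightarrow> j \<le> k" unfolding j_def using finK2 by simp
  have ip: "i < p" and ki: "r ! i \<in> key_nodes I" using iK unfolding K1_def by auto
  have pj: "p \<le> j" and jl: "j < length r" and kj: "r ! j \<in> key_nodes I" using jK unfolding K2_def by auto
  have nk: "\<forall>k. i < k \<and> k < j \<longrightarrow> r ! k \<notin> key_nodes I"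
  proof (intro allI impI)
    fix k assume k: "i < k \<and> k < j"
    show "r ! k \<notin> key_nodes I"
    proof
      assume kk: "r ! k \<in> key_nodes I"
      show False
      proof (cases "k < p")
        case True then have "k \<in> K1" using kk unfolding K1_def by auto
        then show False using imax k by fastforce
      next
        case False then have "k \<in> K2" using kk k jl unfolding K2_def by auto
        then show False using jmin k by fastforce
      qed
    qed
  qed
  define F where "F = take (j - i + 1) (drop i r)"
  have FR: "F \<in> route_frags I r" unfolding route_frags_def F_def
    using ip pj jl ki kj nk by (intro CollectI exI[of _ i] exI[of _ j]) auto
  have lenF: "length F = j - i + 1" using ip pj jl unfolding F_def by simp
  have nth: "\<And>k. k < length F \<Longrightarrow> F ! k = r ! (i + k)" using ip pj jl lenF unfolding F_def by simp
  have Fne: "F \<noteq> []" using lenF by auto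
  have hdF: "hd F = r ! i" using nth[of 0] lenF Fne by (simp add: hd_conv_nth)
  have "r ! i \<notin> S"
  proof
    assume "r ! i \<in> S"
    then have "i \<in> P" unfolding P_def using ip pl by auto
    then show False using pmin ip by fastforce
  qed
  moreover have "r ! p \<in> set F"
  proof -
    have "p - i < length F" using lenF ip pj by auto
    then have "F ! (p - i) \<in> set F" by simp
    moreover have "F ! (p - i) = r ! p" using nth[of "p - i"] lenF ip pj by simp
    ultimately show ?thesis by simp
  qed
  moreover have "r ! p \<in> S" using pP unfolding P_def by auto
  moreover have "set F \<subseteq> set r" unfolding F_def
    by (meson order.trans set_drop_subset set_take_subset)
  ultimately have "F \<in> route_frags I r \<and> hd F \<notin> S \<and> set F \<inter> S \<noteq> {} \<and> set F \<subseteq> set r"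
    using FR hdF by auto
  then show ?thesis unfolding r_def by blast
qed


lemma part1:
  assumes V: "valid_instance I" and FS: "feasible_solution I R" and St: "S \<subseteq> tasks I"
  shows "(\<Sum>F\<in>delta_in I S. frag_incidence I R F) \<ge> of_int \<lceil>(\<Sum>v\<in>S. dem I v) / cap I\<rceil>"
proof -
  have dc: "distinct (concat R)" and sc: "set (concat R) = tasks I"
    and capw: "\<forall>ws\<in>set R. sum_list (map (dem I) ws) \<le> cap I"
    and sch: "\<forall>ws\<in>set R. \<exists>\<sigma>. sched_ok I (0 # ws @ [0]) \<sigma>"
    using FS unfolding feasible_solution_def by blast+
  have disj: "\<And>ys zs. ys \<in> set R \<Longrightarrow> zs \<in> set R \<Longrightarrow> ys \<noteq> zs \<Longrightarrow> set ys \<inter> set zs = {}"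
    and dws: "\<And>ys. ys \<in> set R \<Longrightarrow> distinct ys"
    using dc unfolding distinct_concat_iff by blast+
  have wt: "\<And>ws. ws \<in> set R \<Longrightarrow> set ws \<subseteq> tasks I" using sc by auto
  have cpos: "cap I > 0" using V unfolding valid_instance_def by auto
  have demnn: "\<And>v. v \<in> tasks I \<Longrightarrow> dem I v \<ge> 0" using V unfolding valid_instance_def nodes_def by auto
  have t0: "0 \<notin> S" using St by (auto simp: tasks_def)
  define A where "A = {ws \<in> set R. set ws \<inter> S \<noteq> {}}"
  have finA: "finite A" unfolding A_def by simp
  have "\<forall>ws\<in>A. \<exists>F. F \<in> route_frags I (0 # ws @ [0]) \<and> hd F \<notin> S \<and> set F \<inter> S \<noteq> {} \<and> set F \<subseteq> set (0 # ws @ [0])"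
    using exists_entry_frag[OF St] unfolding A_def by blast
  then obtain f where f: "\<And>ws. ws \<in> A \<Longrightarrow> f ws \<in> route_frags I (0 # ws @ [0]) \<and> hd (f ws) \<notin> S \<and> set (f ws) \<inter> S \<noteq> {} \<and> set (f ws) \<subseteq> set (0 # ws @ [0])"
    by metis
  have isf: "\<And>ws. ws \<in> A \<Longrightarrow> is_fragment I (f ws)"
  proof -
    fix ws assume ws: "ws \<in> A"
    then have wR: "ws \<in> set R" unfolding A_def by auto
    obtain \<sigma> where "sched_ok I (0 # ws @ [0]) \<sigma>" using sch wR by blast
    then show "is_fragment I (f ws)"
      using route_frag_is_fragment[OF V wt[OF wR] dws[OF wR]] capw wR f[OF ws] by blast
  qed
  have inD: "\<And>ws. ws \<in> A \<Longrightarrow> f ws \<in> delta_in I S"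
    using f isf unfolding delta_in_def fragments_def by auto
  have inc1: "\<And>ws. ws \<in> A \<Longrightarrow> frag_incidence I R (f ws) = 1"
    using f isf unfolding frag_incidence_def A_def by auto
  have injf: "inj_on f A"
  proof
    fix ws1 ws2 assume w1: "ws1 \<in> A" and w2: "ws2 \<in> A" and eq: "f ws1 = f ws2"
    obtain t where t: "t \<in> set (f ws1)" "t \<in> S" using f[OF w1] by blast
    have "t \<in> set ws1" using t f[OF w1] t0 by auto
    moreover have "t \<in> set ws2" using t f[OF w2] t0 eq by auto
    ultimately show "ws1 = ws2" using disj w1 w2 unfolding A_def by blast
  qed
  have finD: "finite (delta_in I S)"
    using finite_fragments by (rule finite_subset[rotated]) (auto simp: delta_in_def)
  have "real (card A) = (\<Sum>F\<in>f ` A. frag_incidence I R F)"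
  proof -
    have "(\<Sum>F\<in>f ` A. frag_incidence I R F) = (\<Sum>ws\<in>A. frag_incidence I R (f ws))"
      by (rule sum.reindex[OF injf, unfolded comp_def])
    also have "\<dots> = (\<Sum>ws\<in>A. 1)" using inc1 by simp
    finally show ?thesis by simp
  qed
  also have "\<dots> \<le> (\<Sum>F\<in>delta_in I S. frag_incidence I R F)"
    by (rule sum_mono2[OF finD]) (use inD in \<open>auto simp: frag_incidence_def\<close>)
  finally have cardle: "real (card A) \<le> (\<Sum>F\<in>delta_in I S. frag_incidence I R F)" .
  have Seq: "S = (\<Union>ws\<in>A. set ws \<inter> S)"
  proof
    show "S \<subseteq> (\<Union>ws\<in>A. set ws \<inter> S)"
    proof
      fix v assume v: "v \<in> S"
      then have "v \<in> set (concat R)" using St sc by auto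
      then obtain ws where "ws \<in> set R" "v \<in> set ws" by auto
      then show "v \<in> (\<Union>ws\<in>A. set ws \<inter> S)" using v unfolding A_def by auto
    qed
  qed auto
  have "(\<Sum>v\<in>S. dem I v) = (\<Sum>ws\<in>A. \<Sum>v\<in>set ws \<inter> S. dem I v)"
    apply (subst Seq)
    apply (rule sum.UNION_disjoint[OF finA])
    using disj unfolding A_def by auto
  also have "\<dots> \<le> (\<Sum>ws\<in>A. cap I)"
  proof (rule sum_mono)
    fix ws assume ws: "ws \<in> A"
    then have wR: "ws \<in> set R" unfolding A_def by auto
    have "(\<Sum>v\<in>set ws \<inter> S. dem I v) \<le> (\<Sum>v\<in>set ws. dem I v)"
      by (rule sum_mono2) (use wt[OF wR] demnn in auto)
    also have "\<dots> = sum_list (map (dem I) ws)" by (simp add: sum_list_distinct_conv_sum_set dws[OF wR])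
    also have "\<dots> \<le> cap I" using capw wR by auto
    finally show "(\<Sum>v\<in>set ws \<inter> S. dem I v) \<le> cap I" .
  qed
  also have "\<dots> = real (card A) * cap I" by simp
  finally have "(\<Sum>v\<in>S. dem I v) / cap I \<le> real (card A)"
    using cpos by (simp add: divide_le_eq)
  then have "\<lceil>(\<Sum>v\<in>S. dem I v) / cap I\<rceil> \<le> int (card A)"
    by (simp add: ceiling_le_iff)
  then have "real_of_int \<lceil>(\<Sum>v\<in>S. dem I v) / cap I\<rceil> \<le> real (card A)"
    by (metis of_int_le_iff of_int_of_nat_eq)
  with cardle show ?thesis by linarith
qed


theorem mainTheorem9:
  fixes I :: vrp_inst
  assumes "valid_instance I"
  shows "(\<forall>R S. feasible_solution I R \<longrightarrow> S \<subseteq> tasks I \<longrightarrow>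
            (\<Sum>F\<in>delta_in I S. frag_incidence I R F)
              \<ge> of_int \<lceil>(\<Sum>v\<in>S. dem I v) / cap I\<rceil>)
       \<and> (\<forall>S (x :: nat list \<Rightarrow> real). S \<subseteq> tasks I \<longrightarrow> (\<forall>F\<in>fragments I. x F \<ge> 0) \<longrightarrow>
            (\<Sum>F\<in>fragments I. real (a_coef S F) * x F) \<ge> (\<Sum>F\<in>delta_in I S. x F)
            \<and> ((\<Sum>F\<in>delta_in I S. x F) \<ge> of_int \<lceil>(\<Sum>v\<in>S. dem I v) / cap I\<rceil>
                 \<longrightarrow> (\<Sum>F\<in>fragments I. real (a_coef S F) * x F)
                       \<ge> of_int \<lceil>(\<Sum>v\<in>S. dem I v) / cap I\<rceil>))"
proof (intro conjI allI impI)
  fix R S assume "feasible_solution I R" "S \<subseteq> tasks I"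
  then show "(\<Sum>F\<in>delta_in I S. frag_incidence I R F) \<ge> of_int \<lceil>(\<Sum>v\<in>S. dem I v) / cap I\<rceil>"
    using part1 assms by blast
next
  fix S and x :: "nat list \<Rightarrow> real" assume "\<forall>F\<in>fragments I. x F \<ge> 0"
  then show "(\<Sum>F\<in>fragments I. real (a_coef S F) * x F) \<ge> (\<Sum>F\<in>delta_in I S. x F)"
    by (rule part2)
next
  fix S and x :: "nat list \<Rightarrow> real" assume "\<forall>F\<in>fragments I. x F \<ge> 0"
    and h: "(\<Sum>F\<in>delta_in I S. x F) \<ge> of_int \<lceil>(\<Sum>v\<in>S. dem I v) / cap I\<rceil>"
  then have "(\<Sum>F\<in>fragments I. real (a_coef S F) * x F) \<ge> (\<Sum>F\<in>delta_in I S. x F)"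
    by (intro part2)
  with h show "(\<Sum>F\<in>fragments I. real (a_coef S F) * x F) \<ge> of_int \<lceil>(\<Sum>v\<in>S. dem I v) / cap I\<rceil>"
    by linarith
qed

end
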